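(* Let $\tau>0$ and let $u^n=(\mathbf E^n,\mathbf H^n)$, $n=0,\dots,N$, be $\mathbb V$-valued random variables satisfying, in the sense of distributions, the midpoint scheme $$\varepsilon\mathbf E^{n+1}=\varepsilon\mathbf E^n+\tfrac\tau2(\nabla\times\mathbf H^n+\nabla\times\mathbf H^{n+1})-\Delta W_e^{n+1},\qquad \mu\mathbf H^{n+1}=\mu\mathbf H^n-\tfrac\tau2(\nabla\times\mathbf E^n+\nabla\times\mathbf E^{n+1})-\Delta W_m^{n+1},$$ where $\Delta W_e^{n+1}=W_e(t_{n+1})-W_e(t_n)$, $\Delta W_m^{n+1}=W_m(t_{n+1})-W_m(t_n)$, $t_n=n\tau$. If $Qh\in\mathbb V_0$ for every $h\in\mathbb V$, then for every $n=0,\dots,N-1$, almost surely $$\nabla\cdot(\varepsilon\mathbf E^{n+1})=\nabla\cdot(\varepsilon\mathbf E^n),\qquad\nabla\cdot(\mu\mathbf H^{n+1})=\nabla\cdot(\mu\mathbf H^n).$$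
   Context: $D\subset\mathbb R^3$ is a cuboid with outer unit normal $\mathbf n$; $\varepsilon,\mu\in L^\infty(D)$ with $\varepsilon,\mu\ge\delta>0$. $\mathbb V=L^2(D)^3\times L^2(D)^3$ with inner product $\int_D(\varepsilon\mathbf E_1\cdot\mathbf E_2+\mu\mathbf H_1\cdot\mathbf H_2)\,\mathrm d\mathbf x$, and $\mathbb V_0=\{(\mathbf E,\mathbf H)\in\mathbb V:\nabla\cdot(\varepsilon\mathbf E)=0,\ \nabla\cdot(\mu\mathbf H)=0,\ \mathbf n\cdot(\mu\mathbf H)=0\text{ on }\partial D\}$. $W_e,W_m$ are independent $Q_e$-, $Q_m$-Wiener processes on $L^2(D)^3$ ($Q_e,Q_m$ symmetric positive definite trace-class), and $W=(\varepsilon^{-1}W_e,\mu^{-1}W_m)$ is a $Q$-Wiener process on $\mathbb V$ with $Q=\mathrm{diag}(\varepsilon^{-1}Q_e,\mu^{-1}Q_m)$. Divergences are taken in the sense of distributions. *)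

theory Defs
  imports "HOL-Probability.Probability"
begin

text \<open>Vector fields on R^3 (representatives of elements of L^2(D)^3) and scalar fields.\<close>
type_synonym vfield = "real^3 \<Rightarrow> real^3"
type_synonym sfield = "real^3 \<Rightarrow> real"

definition L2 :: "(real^3) set \<Rightarrow> vfield \<Rightarrow> bool" where
  "L2 D f \<longleftrightarrow> (\<lambda>x. indicator D x *\<^sub>R f x) \<in> borel_measurable lborel
     \<and> set_integrable lborel D (\<lambda>x. (norm (f x))\<^sup>2)"

definition L2s :: "(real^3) set \<Rightarrow> sfield \<Rightarrow> bool" where
  "L2s D f \<longleftrightarrow> (\<lambda>x. indicator D x * f x) \<in> borel_measurable lborel
     \<and> set_integrable lborel D (\<lambda>x. (f x)\<^sup>2)"

definition l2inner :: "(real^3) set \<Rightarrow> vfield \<Rightarrow> vfield \<Rightarrow> real" where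
  "l2inner D f g = set_lebesgue_integral lborel D (\<lambda>x. f x \<bullet> g x)"

definition l2norm :: "(real^3) set \<Rightarrow> vfield \<Rightarrow> real" where
  "l2norm D f = sqrt (l2inner D f f)"

definition fminus :: "vfield \<Rightarrow> vfield \<Rightarrow> vfield" where
  "fminus f g = (\<lambda>x. f x - g x)"

definition fscale :: "sfield \<Rightarrow> vfield \<Rightarrow> vfield" where
  "fscale c f = (\<lambda>x. c x *\<^sub>R f x)"

definition partial :: "3 \<Rightarrow> sfield \<Rightarrow> sfield" where
  "partial i f x = frechet_derivative f (at x) (axis i 1)"

coinductive smooth :: "sfield \<Rightarrow> bool" where
  "(\<forall>x. f differentiable (at x)) \<Longrightarrow> (\<forall>i. smooth (partial i f)) \<Longrightarrow> smooth f"

definition test_fun :: "(real^3) set \<Rightarrow> sfield \<Rightarrow> bool" where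
  "test_fun D \<psi> \<longleftrightarrow> smooth \<psi> \<and> compact (closure {x. \<psi> x \<noteq> 0})
     \<and> closure {x. \<psi> x \<noteq> 0} \<subseteq> D"

definition test_vfield :: "(real^3) set \<Rightarrow> vfield \<Rightarrow> bool" where
  "test_vfield D \<phi> \<longleftrightarrow> (\<forall>j. test_fun D (\<lambda>x. \<phi> x $ j))"

definition grad :: "sfield \<Rightarrow> vfield" where
  "grad \<psi> x = (\<chi> i. partial i \<psi> x)"

definition curl :: "vfield \<Rightarrow> vfield" where
  "curl \<phi> x = vector
     [partial 2 (\<lambda>y. \<phi> y $ 3) x - partial 3 (\<lambda>y. \<phi> y $ 2) x,
      partial 3 (\<lambda>y. \<phi> y $ 1) x - partial 1 (\<lambda>y. \<phi> y $ 3) x,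
      partial 1 (\<lambda>y. \<phi> y $ 2) x - partial 2 (\<lambda>y. \<phi> y $ 1) x]"

text \<open>Distributional divergence of an L^2 field F on D: the distribution
  psi \<mapsto> - \<integral>_D F \<cdot> grad psi on test functions (set to 0 off test functions).\<close>
definition div_distr :: "(real^3) set \<Rightarrow> vfield \<Rightarrow> sfield \<Rightarrow> real" where
  "div_distr D F \<psi> = (if test_fun D \<psi> then - l2inner D F (grad \<psi>) else 0)"

text \<open>Vanishing normal trace n \<cdot> F = 0 on the boundary, in the H(div) sense via Green's formula:
  div F is an L^2 function d, and \<integral>_D F \<cdot> grad psi + \<integral>_D d psi = 0 for all psi smooth up to the boundary.\<close>
definition normal_trace_zero :: "(real^3) set \<Rightarrow> vfield \<Rightarrow> bool" where
  "normal_trace_zero D F \<longleftrightarrow> (\<exists>d. L2s D d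
      \<and> (\<forall>\<psi>. test_fun D \<psi> \<longrightarrow> div_distr D F \<psi> = set_lebesgue_integral lborel D (\<lambda>x. d x * \<psi> x))
      \<and> (\<forall>\<psi>. smooth \<psi> \<longrightarrow>
           l2inner D F (grad \<psi>) + set_lebesgue_integral lborel D (\<lambda>x. d x * \<psi> x) = 0))"

definition coefficient :: "(real^3) set \<Rightarrow> real \<Rightarrow> sfield \<Rightarrow> bool" where
  "coefficient D \<delta> c \<longleftrightarrow> c \<in> borel_measurable lborel
     \<and> (\<exists>C. AE x in lborel. x \<in> D \<longrightarrow> \<delta> \<le> c x \<and> c x \<le> C)"

definition inV :: "(real^3) set \<Rightarrow> vfield \<times> vfield \<Rightarrow> bool" where
  "inV D u \<longleftrightarrow> L2 D (fst u) \<and> L2 D (snd u)"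

definition inV0 :: "(real^3) set \<Rightarrow> sfield \<Rightarrow> sfield \<Rightarrow> vfield \<times> vfield \<Rightarrow> bool" where
  "inV0 D \<epsilon> \<mu> u \<longleftrightarrow> inV D u
     \<and> (\<forall>\<psi>. div_distr D (fscale \<epsilon> (fst u)) \<psi> = 0)
     \<and> (\<forall>\<psi>. div_distr D (fscale \<mu> (snd u)) \<psi> = 0)
     \<and> normal_trace_zero D (fscale \<mu> (snd u))"

definition Qop :: "sfield \<Rightarrow> sfield \<Rightarrow> (vfield \<Rightarrow> vfield) \<Rightarrow> (vfield \<Rightarrow> vfield)
     \<Rightarrow> vfield \<times> vfield \<Rightarrow> vfield \<times> vfield" where
  "Qop \<epsilon> \<mu> Qe Qm u = (fscale (\<lambda>x. 1 / \<epsilon> x) (Qe (fst u)), fscale (\<lambda>x. 1 / \<mu> x) (Qm (snd u)))"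

definition l2_onb :: "(real^3) set \<Rightarrow> (nat \<Rightarrow> vfield) \<Rightarrow> bool" where
  "l2_onb D e \<longleftrightarrow> (\<forall>k. L2 D (e k))
     \<and> (\<forall>k l. l2inner D (e k) (e l) = (if k = l then 1 else 0))
     \<and> (\<forall>f. L2 D f \<longrightarrow>
          (\<lambda>n. l2norm D (fminus f (\<lambda>x. \<Sum>k<n. l2inner D f (e k) *\<^sub>R e k x))) \<longlonglongrightarrow> 0)"

text \<open>Symmetric, nonnegative, trace-class linear operator on L^2(D)^3 (acting on representatives,
  compatible with a.e. equality).\<close>
definition covariance_op :: "(real^3) set \<Rightarrow> (vfield \<Rightarrow> vfield) \<Rightarrow> bool" where
  "covariance_op D Q \<longleftrightarrow>
     (\<forall>f. L2 D f \<longrightarrow> L2 D (Q f))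
   \<and> (\<forall>f g. L2 D f \<longrightarrow> L2 D g \<longrightarrow> l2norm D (fminus f g) = 0 \<longrightarrow> l2norm D (fminus (Q f) (Q g)) = 0)
   \<and> (\<forall>a b f g. L2 D f \<longrightarrow> L2 D g \<longrightarrow>
        l2norm D (fminus (Q (\<lambda>x. a *\<^sub>R f x + b *\<^sub>R g x)) (\<lambda>x. a *\<^sub>R Q f x + b *\<^sub>R Q g x)) = 0)
   \<and> (\<forall>f g. L2 D f \<longrightarrow> L2 D g \<longrightarrow> l2inner D (Q f) g = l2inner D f (Q g))
   \<and> (\<forall>f. L2 D f \<longrightarrow> 0 \<le> l2inner D (Q f) f)
   \<and> (\<exists>e. l2_onb D e \<and> summable (\<lambda>k. l2inner D (Q (e k)) (e k)))"

definition centered_gaussian :: "'w measure \<Rightarrow> ('w \<Rightarrow> real) \<Rightarrow> real \<Rightarrow> bool" where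
  "centered_gaussian M X v \<longleftrightarrow> X \<in> borel_measurable M \<and>
     (if v = 0 then (AE \<omega> in M. X \<omega> = 0) else distributed M lborel X (normal_density 0 (sqrt v)))"

text \<open>Q-Wiener process on L^2(D)^3 (Da Prato--Zabczyk): W(0) = 0, continuous paths,
  W(t)-W(s) ~ N(0,(t-s)Q) (Gaussian measure on the Hilbert space, characterised by its
  one-dimensional projections), independent increments (w.r.t. the cylinder = Borel sigma algebra).\<close>
definition qwiener :: "(real^3) set \<Rightarrow> 'w measure \<Rightarrow> (vfield \<Rightarrow> vfield) \<Rightarrow> (real \<Rightarrow> 'w \<Rightarrow> vfield) \<Rightarrow> bool" where
  "qwiener D M Q W \<longleftrightarrow>
     (\<forall>t\<ge>0. \<forall>\<omega>\<in>space M. L2 D (W t \<omega>))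
   \<and> (AE \<omega> in M. l2norm D (W 0 \<omega>) = 0)
   \<and> (AE \<omega> in M. \<forall>t\<ge>0. ((\<lambda>s. l2norm D (fminus (W s \<omega>) (W t \<omega>))) \<longlongrightarrow> 0) (at t within {0..}))
   \<and> (\<forall>s t h. 0 \<le> s \<longrightarrow> s \<le> t \<longrightarrow> L2 D h \<longrightarrow>
        centered_gaussian M (\<lambda>\<omega>. l2inner D (fminus (W t \<omega>) (W s \<omega>)) h) ((t - s) * l2inner D (Q h) h))
   \<and> (\<forall>(k::nat) (t::nat \<Rightarrow> real) (h::nat \<Rightarrow> nat \<Rightarrow> vfield).
        0 \<le> t 0 \<longrightarrow> (\<forall>j<k. t j < t (Suc j)) \<longrightarrow> (\<forall>j l. L2 D (h j l)) \<longrightarrow>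
        prob_space.indep_vars M (\<lambda>_. Pi\<^sub>M UNIV (\<lambda>_. borel))
          (\<lambda>j \<omega>. (\<lambda>l. l2inner D (fminus (W (t (Suc j)) \<omega>) (W (t j) \<omega>)) (h j l))) {..<k})"

text \<open>Independence of two processes (sigma algebras generated by all projections at countably many times).\<close>
definition indep_processes :: "(real^3) set \<Rightarrow> 'w measure \<Rightarrow> (real \<Rightarrow> 'w \<Rightarrow> vfield) \<Rightarrow> (real \<Rightarrow> 'w \<Rightarrow> vfield) \<Rightarrow> bool" where
  "indep_processes D M W1 W2 \<longleftrightarrow>
     (\<forall>(t::nat \<Rightarrow> real) (s::nat \<Rightarrow> real) (h::nat \<Rightarrow> vfield) (g::nat \<Rightarrow> vfield).
        (\<forall>i. 0 \<le> t i \<and> 0 \<le> s i \<and> L2 D (h i) \<and> L2 D (g i)) \<longrightarrow>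
        prob_space.indep_var M (Pi\<^sub>M UNIV (\<lambda>_. borel)) (\<lambda>\<omega>. (\<lambda>i. l2inner D (W1 (t i) \<omega>) (h i)))
                               (Pi\<^sub>M UNIV (\<lambda>_. borel)) (\<lambda>\<omega>. (\<lambda>i. l2inner D (W2 (s i) \<omega>) (g i))))"

text \<open>L^2(D)^3-valued random variable (weakly measurable = Borel measurable, L^2 separable).\<close>
definition random_field :: "(real^3) set \<Rightarrow> 'w measure \<Rightarrow> ('w \<Rightarrow> vfield) \<Rightarrow> bool" where
  "random_field D M F \<longleftrightarrow> (\<forall>\<omega>\<in>space M. L2 D (F \<omega>))
     \<and> (\<forall>h. L2 D h \<longrightarrow> (\<lambda>\<omega>. l2inner D (F \<omega>) h) \<in> borel_measurable M)"

text \<open>eps E1 = eps E0 + tau/2 (curl H0 + curl H1) - dWe,  mu H1 = mu H0 - tau/2 (curl E0 + curl E1) - dWm,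
  tested against vector test functions phi (distributional curl: <curl H, phi> = \<integral> H \<cdot> curl phi).\<close>
definition midpoint_step :: "(real^3) set \<Rightarrow> sfield \<Rightarrow> sfield \<Rightarrow> real
    \<Rightarrow> vfield \<Rightarrow> vfield \<Rightarrow> vfield \<Rightarrow> vfield \<Rightarrow> vfield \<Rightarrow> vfield \<Rightarrow> bool" where
  "midpoint_step D \<epsilon> \<mu> \<tau> E0 H0 E1 H1 dWe dWm \<longleftrightarrow>
     (\<forall>\<phi>. test_vfield D \<phi> \<longrightarrow>
        l2inner D (fscale \<epsilon> E1) \<phi> = l2inner D (fscale \<epsilon> E0) \<phi>
          + \<tau> / 2 * (l2inner D H0 (curl \<phi>) + l2inner D H1 (curl \<phi>)) - l2inner D dWe \<phi>
      \<and> l2inner D (fscale \<mu> H1) \<phi> = l2inner D (fscale \<mu> H0) \<phi>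
          - \<tau> / 2 * (l2inner D E0 (curl \<phi>) + l2inner D E1 (curl \<phi>)) - l2inner D dWm \<phi>)"

end

theory Submission
  imports Defs
begin


lemma dir_deriv:
  fixes f :: "real^3 \<Rightarrow> real"
  assumes "f differentiable (at (y + s *\<^sub>R v))"
  shows "((\<lambda>t. f (y + t *\<^sub>R v)) has_real_derivative frechet_derivative f (at (y + s *\<^sub>R v)) v) (at s)"
proof -
  let ?F = "frechet_derivative f (at (y + s *\<^sub>R v))"
  have f: "(f has_derivative ?F) (at (y + s *\<^sub>R v))"
    using assms frechet_derivative_works by blast
  have l: "((\<lambda>t. y + t *\<^sub>R v) has_derivative (\<lambda>t. t *\<^sub>R v)) (at s)"
    by (auto intro!: derivative_eq_intros)
  have "((f \<circ> (\<lambda>t. y + t *\<^sub>R v)) has_derivative (?F \<circ> (\<lambda>t. t *\<^sub>R v))) (at s)"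
    apply (rule diff_chain_at[OF l]) using f by simp
  moreover have "(?F \<circ> (\<lambda>t. t *\<^sub>R v)) = (\<lambda>t. ?F v * t)"
    using has_derivative_linear[OF f] by (auto simp: linear_scale mult.commute)
  ultimately have "((\<lambda>t. f (y + t *\<^sub>R v)) has_derivative (\<lambda>t. ?F v * t)) (at s)"
    by (simp add: o_def)
  thus ?thesis unfolding has_field_derivative_def by (simp add: o_def)
qed

lemma delta_mvt:
  fixes f :: "real^3 \<Rightarrow> real"
  assumes df: "\<forall>x. f differentiable at x"
    and dg: "\<forall>x. (\<lambda>y. frechet_derivative f (at y) u) differentiable at x"
    and h: "0 < h"
  shows "\<exists>\<xi> \<eta>. 0<\<xi> \<and> \<xi><h \<and> 0<\<eta> \<and> \<eta><h \<and>
     f (x + h*\<^sub>R u + h*\<^sub>R w) - f (x + h*\<^sub>R u) - f (x + h*\<^sub>R w) + f x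
       = h*h * frechet_derivative (\<lambda>y. frechet_derivative f (at y) u) (at (x + \<xi> *\<^sub>R u + \<eta> *\<^sub>R w)) w"
proof -
  define P where "P = (\<lambda>y. frechet_derivative f (at y) u)"
  define g where "g = (\<lambda>s. f ((x + h*\<^sub>R w) + s*\<^sub>R u) - f (x + s*\<^sub>R u))"
  have "\<And>s. (g has_real_derivative (P ((x + h*\<^sub>R w) + s*\<^sub>R u) - P (x + s*\<^sub>R u))) (at s)"
    unfolding g_def P_def using df
    by (intro derivative_intros dir_deriv) auto
  then obtain \<xi> where xi: "0 < \<xi>" "\<xi> < h"
    "g h - g 0 = (h - 0) * (P ((x + h*\<^sub>R w) + \<xi>*\<^sub>R u) - P (x + \<xi>*\<^sub>R u))"
    using MVT2[OF h, of g "\<lambda>s. P ((x + h*\<^sub>R w) + s*\<^sub>R u) - P (x + s*\<^sub>R u)"] by blast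
  define k where "k = (\<lambda>t. P ((x + \<xi>*\<^sub>R u) + t *\<^sub>R w))"
  have "\<And>t. (k has_real_derivative frechet_derivative P (at ((x + \<xi>*\<^sub>R u) + t *\<^sub>R w)) w) (at t)"
    unfolding k_def using dg P_def by (intro dir_deriv) auto
  then obtain \<eta> where eta: "0 < \<eta>" "\<eta> < h"
    "k h - k 0 = (h - 0) * frechet_derivative P (at ((x + \<xi>*\<^sub>R u) + \<eta> *\<^sub>R w)) w"
    using MVT2[OF h, of k "\<lambda>t. frechet_derivative P (at ((x + \<xi>*\<^sub>R u) + t *\<^sub>R w)) w"] by blast
  have "k h - k 0 = P ((x + h*\<^sub>R w) + \<xi>*\<^sub>R u) - P (x + \<xi>*\<^sub>R u)"
    unfolding k_def by (simp add: algebra_simps)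
  hence "g h - g 0 = h * h * frechet_derivative P (at ((x + \<xi>*\<^sub>R u) + \<eta> *\<^sub>R w)) w"
    using xi eta by simp
  moreover have "g h - g 0 = f (x + h*\<^sub>R u + h*\<^sub>R w) - f (x + h*\<^sub>R u) - f (x + h*\<^sub>R w) + f x"
    unfolding g_def by (simp add: algebra_simps)
  ultimately show ?thesis using xi eta P_def by metis
qed

lemma smooth_D: "smooth f \<Longrightarrow> (\<forall>x. f differentiable (at x)) \<and> (\<forall>i. smooth (partial i f))"
  by (erule smooth.cases) auto

lemma partial_eq: "partial i f = (\<lambda>y. frechet_derivative f (at y) (axis i 1))"
  by (auto simp: partial_def)

lemma schwarz:
  assumes "smooth f"
  shows "partial i (partial j f) x = partial j (partial i f) x"
proof -
  let ?u = "axis j 1 :: real^3" and ?w = "axis i (1::real) :: real^3"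
  have sf: "\<forall>x. f differentiable at x" and sj: "smooth (partial j f)" and si: "smooth (partial i f)"
    using smooth_D[OF assms] by auto
  have dj: "\<forall>x. (partial j f) differentiable at x" and di: "\<forall>x. (partial i f) differentiable at x"
    using smooth_D[OF sj] smooth_D[OF si] by auto
  have dij: "\<forall>x. partial i (partial j f) differentiable at x"
    using smooth_D[OF sj] smooth_D by blast
  have dji: "\<forall>x. partial j (partial i f) differentiable at x"
    using smooth_D[OF si] smooth_D by blast
  have "\<forall>n. \<exists>a b c d. 0<a \<and> a<inverse (real (Suc n)) \<and> 0<b \<and> b<inverse (real (Suc n))
     \<and> 0<c \<and> c<inverse (real (Suc n)) \<and> 0<d \<and> d<inverse (real (Suc n)) \<and>
     partial i (partial j f) (x + a *\<^sub>R ?u + b *\<^sub>R ?w) = partial j (partial i f) (x + c *\<^sub>R ?w + d *\<^sub>R ?u)"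
  proof
    fix n
    define h where "h = inverse (real (Suc n))"
    have h: "0 < h" unfolding h_def by simp
    obtain a b where ab: "0<a" "a<h" "0<b" "b<h"
      "f (x + h*\<^sub>R ?u + h*\<^sub>R ?w) - f (x + h*\<^sub>R ?u) - f (x + h*\<^sub>R ?w) + f x
       = h*h * partial i (partial j f) (x + a *\<^sub>R ?u + b *\<^sub>R ?w)"
      using delta_mvt[OF sf _ h, of ?u x ?w] dj unfolding partial_eq by blast
    obtain c d where cd: "0<c" "c<h" "0<d" "d<h"
      "f (x + h*\<^sub>R ?w + h*\<^sub>R ?u) - f (x + h*\<^sub>R ?w) - f (x + h*\<^sub>R ?u) + f x
       = h*h * partial j (partial i f) (x + c *\<^sub>R ?w + d *\<^sub>R ?u)"
      using delta_mvt[OF sf _ h, of ?w x ?u] di unfolding partial_eq by blast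
    have "h*h * partial i (partial j f) (x + a *\<^sub>R ?u + b *\<^sub>R ?w) = h*h * partial j (partial i f) (x + c *\<^sub>R ?w + d *\<^sub>R ?u)"
      using ab(5) cd(5) by (simp add: algebra_simps)
    hence "partial i (partial j f) (x + a *\<^sub>R ?u + b *\<^sub>R ?w) = partial j (partial i f) (x + c *\<^sub>R ?w + d *\<^sub>R ?u)"
      using h by simp
    thus "\<exists>a b c d. 0<a \<and> a<inverse (real (Suc n)) \<and> 0<b \<and> b<inverse (real (Suc n))
     \<and> 0<c \<and> c<inverse (real (Suc n)) \<and> 0<d \<and> d<inverse (real (Suc n)) \<and>
     partial i (partial j f) (x + a *\<^sub>R ?u + b *\<^sub>R ?w) = partial j (partial i f) (x + c *\<^sub>R ?w + d *\<^sub>R ?u)"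
      using ab cd h_def by blast
  qed
  then obtain a b c d where H: "\<And>n. 0<a n \<and> a n<inverse (real (Suc n)) \<and> 0<b n \<and> b n<inverse (real (Suc n))
     \<and> 0<c n \<and> c n<inverse (real (Suc n)) \<and> 0<d n \<and> d n<inverse (real (Suc n)) \<and>
     partial i (partial j f) (x + a n *\<^sub>R ?u + b n *\<^sub>R ?w) = partial j (partial i f) (x + c n *\<^sub>R ?w + d n *\<^sub>R ?u)"
    by metis
  have z: "(\<lambda>n. e n) \<longlonglongrightarrow> 0" if "\<And>n. 0 < e n \<and> e n < inverse (real (Suc n))" for e :: "nat \<Rightarrow> real"
    apply (rule real_tendsto_sandwich[of "\<lambda>_. 0" _ _ "\<lambda>n. inverse (real (Suc n))"])
    using that apply (intro always_eventually allI) apply (meson less_imp_le)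
    using that apply (intro always_eventually allI) apply (meson less_imp_le)
    apply simp
    by (rule LIMSEQ_inverse_real_of_nat)
  have la: "a \<longlonglongrightarrow> 0" "b \<longlonglongrightarrow> 0" "c \<longlonglongrightarrow> 0" "d \<longlonglongrightarrow> 0"
    using z H by blast+
  have p1: "(\<lambda>n. x + a n *\<^sub>R ?u + b n *\<^sub>R ?w) \<longlonglongrightarrow> x + 0 *\<^sub>R ?u + 0 *\<^sub>R ?w"
    by (intro tendsto_intros la)
  have p2: "(\<lambda>n. x + c n *\<^sub>R ?w + d n *\<^sub>R ?u) \<longlonglongrightarrow> x + 0 *\<^sub>R ?w + 0 *\<^sub>R ?u"
    by (intro tendsto_intros la)
  have c1: "isCont (partial i (partial j f)) x" using dij differentiable_imp_continuous_within by blast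
  have c2: "isCont (partial j (partial i f)) x" using dji differentiable_imp_continuous_within by blast
  have L1: "(\<lambda>n. partial i (partial j f) (x + a n *\<^sub>R ?u + b n *\<^sub>R ?w)) \<longlonglongrightarrow> partial i (partial j f) x"
    using isCont_tendsto_compose[OF c1] p1 by simp
  have L2: "(\<lambda>n. partial i (partial j f) (x + a n *\<^sub>R ?u + b n *\<^sub>R ?w)) \<longlonglongrightarrow> partial j (partial i f) x"
    using isCont_tendsto_compose[OF c2] p2 H by simp
  show ?thesis using LIMSEQ_unique[OF L1 L2] .
qed

lemma partial_support:
  assumes "smooth f"
  shows "closure {x. partial j f x \<noteq> 0} \<subseteq> closure {x. f x \<noteq> 0}"
proof (rule closure_minimal)
  show "closed (closure {x. f x \<noteq> 0})" by simp
  show "{x. partial j f x \<noteq> 0} \<subseteq> closure {x. f x \<noteq> 0}"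
  proof (rule subsetI, rule ccontr)
    fix x assume x: "x \<in> {x. partial j f x \<noteq> 0}" "x \<notin> closure {x. f x \<noteq> 0}"
    have "frechet_derivative f (at x) = frechet_derivative (\<lambda>_. 0::real) (at x)"
      apply (rule frechet_derivative_transform_within_open[of _ _ "- closure {x. f x \<noteq> 0}"])
      using smooth_D[OF assms] x closure_subset[of "{x. f x \<noteq> 0}"] by auto
    hence "partial j f x = 0" by (simp add: partial_def)
    thus False using x by simp
  qed
qed

lemma test_fun_partial:
  assumes "test_fun D f" shows "test_fun D (partial j f)"
proof -
  have sm: "smooth f" using assms test_fun_def by blast
  have s: "closure {x. partial j f x \<noteq> 0} \<subseteq> closure {x. f x \<noteq> 0}" by (rule partial_support[OF sm])
  have "compact (closure {x. f x \<noteq> 0} \<inter> closure {x. partial j f x \<noteq> 0})"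
    using assms unfolding test_fun_def by (intro compact_Int_closed) auto
  moreover have "closure {x. f x \<noteq> 0} \<inter> closure {x. partial j f x \<noteq> 0} = closure {x. partial j f x \<noteq> 0}"
    using s by blast
  ultimately show ?thesis using assms s smooth_D[OF sm] unfolding test_fun_def by auto
qed

lemma test_vfield_grad: "test_fun D f \<Longrightarrow> test_vfield D (grad f)"
  unfolding test_vfield_def grad_def by (simp add: test_fun_partial)

lemma curl_grad: "test_fun D f \<Longrightarrow> curl (grad f) = (\<lambda>x. 0)"
proof -
  assume "test_fun D f"
  hence sm: "smooth f" using test_fun_def by blast
  have e: "(\<lambda>y. grad f y $ i) = partial i f" for i by (simp add: grad_def fun_eq_iff)
  show ?thesis unfolding curl_def e
    by (simp add: schwarz[OF sm, of 2 3] schwarz[OF sm, of 3 1] schwarz[OF sm, of 1 2] fun_eq_iff vec_eq_iff vector_def forall_3)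
qed

lemma grad_cont: "test_fun D f \<Longrightarrow> continuous_on UNIV (grad f)"
proof -
  assume "test_fun D f"
  hence sm: "smooth f" using test_fun_def by blast
  have "continuous_on UNIV (partial i f)" for i
    using smooth_D[OF smooth_D[OF sm, THEN conjunct2, rule_format, of i]]
    by (meson continuous_at_imp_continuous_on differentiable_imp_continuous_within)
  thus ?thesis unfolding grad_def[abs_def] by (intro continuous_intros) auto
qed

lemma L2_grad:
  assumes "test_fun D f" "D = box a b"
  shows "L2 D (grad f)"
proof -
  have c: "continuous_on UNIV (grad f)" by (rule grad_cont[OF assms(1)])
  have m: "(\<lambda>x. indicator D x *\<^sub>R grad f x) \<in> borel_measurable lborel"
  proof -
    have "grad f \<in> borel_measurable lborel" using borel_measurable_continuous_onI[OF c] by simp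
    moreover have "D \<in> sets lborel" using assms(2) by simp
    ultimately show ?thesis by (intro borel_measurable_scaleR borel_measurable_indicator)
  qed
  have "continuous_on (cbox a b) (\<lambda>x. (norm (grad f x))\<^sup>2)"
    using c by (intro continuous_intros) (auto intro: continuous_on_subset)
  hence "set_integrable lborel (cbox a b) (\<lambda>x. (norm (grad f x))\<^sup>2)"
    unfolding set_integrable_def by (intro borel_integrable_compact) auto
  hence "set_integrable lborel D (\<lambda>x. (norm (grad f x))\<^sup>2)"
    by (rule set_integrable_subset) (use assms(2) box_subset_cbox in auto)
  thus ?thesis using m L2_def by blast
qed




lemma sq_tri: "(norm (u + v :: real^3))\<^sup>2 \<le> 2 * (norm u)\<^sup>2 + 2 * (norm v)\<^sup>2"
proof -
  have "norm (u+v) \<le> norm u + norm v" by (rule norm_triangle_ineq)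
  hence "(norm (u+v))\<^sup>2 \<le> (norm u + norm v)\<^sup>2" by (simp add: power_mono)
  also have "\<dots> \<le> 2 * (norm u)\<^sup>2 + 2 * (norm v)\<^sup>2"
    using sum_squares_ge_zero[of "norm u - norm v" 0] by (simp add: power2_eq_square algebra_simps)
  finally show ?thesis .
qed

lemma ind_sq: "indicator D x * (norm (v::real^3))\<^sup>2 = (norm (indicator D x *\<^sub>R v))\<^sup>2"
  by (auto simp: indicator_def)

lemma L2_lin:
  assumes D: "D \<in> sets lborel" and f: "L2 D f" and g: "L2 D g"
  shows "L2 D (\<lambda>x. a *\<^sub>R f x + b *\<^sub>R g x)"
proof -
  let ?F = "\<lambda>x. indicator D x *\<^sub>R f x" and ?G = "\<lambda>x. indicator D x *\<^sub>R g x"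
  have mF: "?F \<in> borel_measurable lborel" and mG: "?G \<in> borel_measurable lborel"
    using f g L2_def by auto
  have e1: "(\<lambda>x. indicator D x *\<^sub>R (a *\<^sub>R f x + b *\<^sub>R g x)) = (\<lambda>x. a *\<^sub>R ?F x + b *\<^sub>R ?G x)"
    by (auto simp: fun_eq_iff algebra_simps)
  have m: "(\<lambda>x. indicator D x *\<^sub>R (a *\<^sub>R f x + b *\<^sub>R g x)) \<in> borel_measurable lborel"
    unfolding e1 by (rule borel_measurable_add; rule borel_measurable_scaleR[OF borel_measurable_const]) (fact mF, fact mG)
  have i1: "integrable lborel (\<lambda>x. indicator D x * (norm (f x))\<^sup>2)"
   and i2: "integrable lborel (\<lambda>x. indicator D x * (norm (g x))\<^sup>2)"
    using f g unfolding L2_def set_integrable_def by auto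
  have ib: "integrable lborel (\<lambda>x. 2*a\<^sup>2 * (indicator D x * (norm (f x))\<^sup>2) + 2*b\<^sup>2 * (indicator D x * (norm (g x))\<^sup>2))"
    using i1 i2 by simp
  have e2: "(\<lambda>x. indicator D x * (norm (a *\<^sub>R f x + b *\<^sub>R g x))\<^sup>2) = (\<lambda>x. (norm (a *\<^sub>R ?F x + b *\<^sub>R ?G x))\<^sup>2)"
    by (auto simp: fun_eq_iff indicator_def)
  have mm: "(\<lambda>x. indicator D x * (norm (a *\<^sub>R f x + b *\<^sub>R g x))\<^sup>2) \<in> borel_measurable lborel"
    unfolding e2 using m[unfolded e1] by measurable
  have pw: "indicator D x * (norm (a *\<^sub>R f x + b *\<^sub>R g x))\<^sup>2 \<le>
      2*a\<^sup>2 * (indicator D x * (norm (f x))\<^sup>2) + 2*b\<^sup>2 * (indicator D x * (norm (g x))\<^sup>2)" for x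
  proof -
    have "(norm (a *\<^sub>R f x + b *\<^sub>R g x))\<^sup>2 \<le> 2 * (norm (a *\<^sub>R f x))\<^sup>2 + 2 * (norm (b *\<^sub>R g x))\<^sup>2"
      by (rule sq_tri)
    also have "\<dots> = 2*a\<^sup>2 * (norm (f x))\<^sup>2 + 2*b\<^sup>2 * (norm (g x))\<^sup>2"
      by (simp add: power_mult_distrib)
    finally show ?thesis by (auto simp: indicator_def)
  qed
  have "integrable lborel (\<lambda>x. indicator D x * (norm (a *\<^sub>R f x + b *\<^sub>R g x))\<^sup>2)"
    by (rule Bochner_Integration.integrable_bound[OF ib mm]) (intro AE_I2, simp add: pw)
  thus ?thesis using m unfolding L2_def set_integrable_def by simp
qed

lemma L2_zero: "L2 D (\<lambda>x. 0)"
  by (simp add: L2_def set_integrable_def)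

lemma L2_diff: "D \<in> sets lborel \<Longrightarrow> L2 D f \<Longrightarrow> L2 D g \<Longrightarrow> L2 D (\<lambda>x. f x - g x)"
  using L2_lin[of D f g 1 "-1"] by simp

lemma L2_sum: "D \<in> sets lborel \<Longrightarrow> (\<forall>k. L2 D (e k)) \<Longrightarrow> L2 D (\<lambda>x. \<Sum>k<(n::nat). c k *\<^sub>R (e k x :: real^3))"
proof (induction n)
  case 0 then show ?case by (simp add: L2_zero)
next
  case (Suc n)
  then show ?case using L2_lin[of D "\<lambda>x. \<Sum>k<n. c k *\<^sub>R e k x" "e n" 1 "c n"] by (simp add: add.commute)
qed

lemma L2_inner_int:
  assumes f: "L2 D f" and g: "L2 D g"
  shows "set_integrable lborel D (\<lambda>x. f x \<bullet> g x)"
proof -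
  let ?F = "\<lambda>x. indicator D x *\<^sub>R f x" and ?G = "\<lambda>x. indicator D x *\<^sub>R g x"
  have mF: "?F \<in> borel_measurable lborel" and mG: "?G \<in> borel_measurable lborel"
    using f g L2_def by auto
  have i1: "integrable lborel (\<lambda>x. indicator D x * (norm (f x))\<^sup>2)"
   and i2: "integrable lborel (\<lambda>x. indicator D x * (norm (g x))\<^sup>2)"
    using f g unfolding L2_def set_integrable_def by auto
  have ib: "integrable lborel (\<lambda>x. indicator D x * (norm (f x))\<^sup>2 + indicator D x * (norm (g x))\<^sup>2)"
    using i1 i2 by simp
  have e: "(\<lambda>x. indicator D x *\<^sub>R (f x \<bullet> g x)) = (\<lambda>x. ?F x \<bullet> ?G x)"
    by (auto simp: fun_eq_iff indicator_def)
  have m: "(\<lambda>x. indicator D x *\<^sub>R (f x \<bullet> g x)) \<in> borel_measurable lborel"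
    unfolding e using mF mG by (intro borel_measurable_inner)
  have pw: "\<bar>indicator D x * (f x \<bullet> g x)\<bar> \<le> indicator D x * (norm (f x))\<^sup>2 + indicator D x * (norm (g x))\<^sup>2" for x
  proof -
    have "\<bar>f x \<bullet> g x\<bar> \<le> norm (f x) * norm (g x)" by (rule Cauchy_Schwarz_ineq2)
    also have "\<dots> \<le> (norm (f x))\<^sup>2 + (norm (g x))\<^sup>2"
      using sum_squares_ge_zero[of "norm (f x) - norm (g x)" 0]
      by (simp add: power2_eq_square algebra_simps)
        (smt (verit) mult_nonneg_nonneg norm_ge_zero)
    finally show ?thesis by (auto simp: indicator_def)
  qed
  show ?thesis unfolding set_integrable_def
    by (rule Bochner_Integration.integrable_bound[OF ib m]) (intro AE_I2, simp add: pw)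
qed

lemma l2inner_diff_right:
  assumes "L2 D f" "L2 D g" "L2 D h"
  shows "l2inner D f (\<lambda>x. g x - h x) = l2inner D f g - l2inner D f h"
  unfolding l2inner_def using L2_inner_int[OF assms(1,2)] L2_inner_int[OF assms(1,3)]
  by (simp add: inner_diff_right)

lemma l2inner_self: "l2inner D f f = (LINT x:D|lborel. (norm (f x))\<^sup>2)"
  unfolding l2inner_def by (simp add: dot_square_norm)

lemma l2inner_self_nonneg: "0 \<le> l2inner D f f"
  unfolding l2inner_self set_lebesgue_integral_def by (intro integral_nonneg_AE) auto

lemma l2_bound:
  assumes f: "L2 D f" and d: "L2 D d" and l: "0 < l"
  shows "\<bar>l2inner D f d\<bar> \<le> (l * l2inner D f f + l2inner D d d / l) / 2"
proof -
  have If: "set_integrable lborel D (\<lambda>x. (norm (f x))\<^sup>2)" and Id: "set_integrable lborel D (\<lambda>x. (norm (d x))\<^sup>2)"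
    using f d L2_def by auto
  have Ifd: "set_integrable lborel D (\<lambda>x. f x \<bullet> d x)" by (rule L2_inner_int[OF f d])
  let ?R = "\<lambda>x. (l * (norm (f x))\<^sup>2 + (norm (d x))\<^sup>2 / l) / 2"
  have IR: "set_integrable lborel D ?R" using If Id by (intro set_integral_add set_integrable_divide set_integrable_mult_right) auto
  have IntR: "(LINT x:D|lborel. ?R x) = (l * l2inner D f f + l2inner D d d / l) / 2"
    unfolding l2inner_self using If Id by (simp add: set_integral_add)
  have pw: "\<bar>f x \<bullet> d x\<bar> \<le> ?R x" for x
  proof -
    have "\<bar>f x \<bullet> d x\<bar> \<le> norm (f x) * norm (d x)" by (rule Cauchy_Schwarz_ineq2)
    also have "\<dots> \<le> ?R x"
    proof -
      have "0 \<le> (l * norm (f x) - norm (d x))\<^sup>2" by simp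
      hence "2 * l * (norm (f x) * norm (d x)) \<le> l\<^sup>2 * (norm (f x))\<^sup>2 + (norm (d x))\<^sup>2"
        by (simp add: power2_eq_square algebra_simps)
      hence "norm (f x) * norm (d x) \<le> (l\<^sup>2 * (norm (f x))\<^sup>2 + (norm (d x))\<^sup>2) / (2 * l)"
        using l by (simp add: field_simps)
      also have "\<dots> = ?R x" using l by (simp add: field_simps power2_eq_square)
      finally show ?thesis .
    qed
    finally show ?thesis .
  qed
  have "l2inner D f d \<le> (LINT x:D|lborel. ?R x)"
    unfolding l2inner_def by (rule set_integral_mono[OF Ifd IR]) (use pw abs_le_iff in blast)
  moreover have "- l2inner D f d \<le> (LINT x:D|lborel. ?R x)"
  proof -
    have "(LINT x:D|lborel. - (f x \<bullet> d x)) \<le> (LINT x:D|lborel. ?R x)"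
      apply (rule set_integral_mono)
      using Ifd IR apply (auto simp: set_integrable_def)[2]
      using pw abs_le_iff by (metis minus_le_iff)
    thus ?thesis unfolding l2inner_def using set_integral_uminus[OF Ifd] by simp
  qed
  ultimately show ?thesis using IntR by linarith
qed

lemma l2_tri:
  assumes "D \<in> sets lborel" "L2 D f" "L2 D g" "L2 D h"
  shows "l2inner D (\<lambda>x. f x - g x) (\<lambda>x. f x - g x) \<le>
     2 * l2inner D (\<lambda>x. f x - h x) (\<lambda>x. f x - h x) + 2 * l2inner D (\<lambda>x. h x - g x) (\<lambda>x. h x - g x)"
proof -
  have I1: "set_integrable lborel D (\<lambda>x. (norm (f x - h x))\<^sup>2)" and I2: "set_integrable lborel D (\<lambda>x. (norm (h x - g x))\<^sup>2)"
   and I3: "set_integrable lborel D (\<lambda>x. (norm (f x - g x))\<^sup>2)"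
    using L2_diff[OF assms(1,2,4)] L2_diff[OF assms(1,4,3)] L2_diff[OF assms(1,2,3)] L2_def by auto
  have "(LINT x:D|lborel. (norm (f x - g x))\<^sup>2) \<le> (LINT x:D|lborel. 2 * (norm (f x - h x))\<^sup>2 + 2 * (norm (h x - g x))\<^sup>2)"
    apply (rule set_integral_mono[OF I3])
    using I1 I2 apply simp
    using sq_tri[of "f x - h x" "h x - g x" for x] by simp
  thus ?thesis unfolding l2inner_self using I1 I2 by simp
qed




lemma set_integrable_sum':
  fixes f :: "'i \<Rightarrow> 'a \<Rightarrow> real"
  shows "finite I \<Longrightarrow> (\<And>i. i\<in>I \<Longrightarrow> set_integrable M A (f i)) \<Longrightarrow> set_integrable M A (\<lambda>x. \<Sum>i\<in>I. f i x)"
  unfolding set_integrable_def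
  apply (simp only: scaleR_sum_right)
  by (intro Bochner_Integration.integrable_sum) auto

lemma set_integral_sum':
  fixes f :: "'i \<Rightarrow> 'a \<Rightarrow> real"
  shows "finite I \<Longrightarrow> (\<And>i. i\<in>I \<Longrightarrow> set_integrable M A (f i)) \<Longrightarrow> (LINT x:A|M. (\<Sum>i\<in>I. f i x)) = (\<Sum>i\<in>I. LINT x:A|M. f i x)"
  unfolding set_integrable_def set_lebesgue_integral_def
  apply (simp only: scaleR_sum_right)
  by (intro Bochner_Integration.integral_sum) auto

definition lc :: "(nat \<Rightarrow> vfield) \<Rightarrow> rat list \<Rightarrow> vfield" where
  "lc e r x = (\<Sum>k<length r. real_of_rat (r!k) *\<^sub>R e k x)"

lemma onb_tends:
  assumes "l2_onb D e" "L2 D g"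
  shows "(\<lambda>n. l2inner D (\<lambda>x. g x - (\<Sum>k<n. l2inner D g (e k) *\<^sub>R e k x)) (\<lambda>x. g x - (\<Sum>k<n. l2inner D g (e k) *\<^sub>R e k x))) \<longlonglongrightarrow> 0"
proof -
  let ?A = "\<lambda>n. l2inner D (\<lambda>x. g x - (\<Sum>k<n. l2inner D g (e k) *\<^sub>R e k x)) (\<lambda>x. g x - (\<Sum>k<n. l2inner D g (e k) *\<^sub>R e k x))"
  have "(\<lambda>n. sqrt (?A n)) \<longlonglongrightarrow> 0"
    using assms unfolding l2_onb_def l2norm_def fminus_def by blast
  hence "(\<lambda>n. (sqrt (?A n))\<^sup>2) \<longlonglongrightarrow> 0\<^sup>2" by (intro tendsto_intros)
  thus ?thesis using l2inner_self_nonneg by simp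
qed

lemma sum_bound:
  fixes e :: "nat \<Rightarrow> vfield" and n :: nat
  assumes D: "D \<in> sets lborel" and e: "\<forall>k. L2 D (e k)" "\<forall>k. l2inner D (e k) (e k) = 1"
    and d: "\<forall>k<n. \<bar>d k\<bar> \<le> \<theta>"
  shows "l2inner D (\<lambda>x. \<Sum>k<n. d k *\<^sub>R e k x) (\<lambda>x. \<Sum>k<n. d k *\<^sub>R e k x) \<le> \<theta>\<^sup>2 * n * n"
proof -
  have Ie: "set_integrable lborel D (\<lambda>x. (norm (e k x))\<^sup>2)" for k using e L2_def by auto
  have IS: "set_integrable lborel D (\<lambda>x. \<Sum>k<n. (norm (e k x))\<^sup>2)"
    by (rule set_integrable_sum') (auto intro: Ie)
  have I1: "set_integrable lborel D (\<lambda>x. (norm (\<Sum>k<n. d k *\<^sub>R e k x))\<^sup>2)"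
    using L2_sum[OF D e(1), where n=n and c=d] L2_def by auto
  have I2: "set_integrable lborel D (\<lambda>x. \<theta>\<^sup>2 * n * (\<Sum>k<n. (norm (e k x))\<^sup>2))"
    using IS by (cases "\<theta>\<^sup>2 * n = 0") (auto simp: mult.assoc)
  have pw: "(norm (\<Sum>k<n. d k *\<^sub>R e k x))\<^sup>2 \<le> \<theta>\<^sup>2 * n * (\<Sum>k<n. (norm (e k x))\<^sup>2)" for x
  proof -
    have "norm (\<Sum>k<n. d k *\<^sub>R e k x) \<le> (\<Sum>k<n. norm (d k *\<^sub>R e k x))" by (rule norm_sum)
    hence "(norm (\<Sum>k<n. d k *\<^sub>R e k x))\<^sup>2 \<le> (\<Sum>k<n. norm (d k *\<^sub>R e k x))\<^sup>2"
      by (simp add: power_mono)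
    also have "\<dots> \<le> (\<Sum>k<n. (norm (d k *\<^sub>R e k x))\<^sup>2) * card {..<n}"
      by (rule sum_squared_le_sum_of_squares)
    also have "\<dots> \<le> (\<Sum>k<n. \<theta>\<^sup>2 * (norm (e k x))\<^sup>2) * n"
    proof -
      have "(norm (d k *\<^sub>R e k x))\<^sup>2 \<le> \<theta>\<^sup>2 * (norm (e k x))\<^sup>2" if "k < n" for k
      proof -
        have "\<bar>d k\<bar>\<^sup>2 \<le> \<theta>\<^sup>2" using d that by (meson abs_ge_zero order_trans power_mono)
        thus ?thesis by (simp add: power_mult_distrib mult_right_mono)
      qed
      thus ?thesis by (auto intro!: mult_right_mono sum_mono)
    qed
    finally show ?thesis by (simp add: sum_distrib_left mult_ac)
  qed
  have "l2inner D (\<lambda>x. \<Sum>k<n. d k *\<^sub>R e k x) (\<lambda>x. \<Sum>k<n. d k *\<^sub>R e k x) \<le> (LINT x:D|lborel. \<theta>\<^sup>2 * n * (\<Sum>k<n. (norm (e k x))\<^sup>2))"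
    unfolding l2inner_self by (rule set_integral_mono[OF I1 I2 pw])
  also have "\<dots> = \<theta>\<^sup>2 * n * (\<Sum>k<n. l2inner D (e k) (e k))"
    unfolding l2inner_self by (simp add: set_integral_sum'[OF _ Ie])
  also have "\<dots> = \<theta>\<^sup>2 * n * n" using e by simp
  finally show ?thesis .
qed

lemma rat_approx:
  assumes D: "D \<in> sets lborel" and onb: "l2_onb D e" and g: "L2 D g" and eta: "0 < \<eta>"
  shows "\<exists>r. l2inner D (\<lambda>x. g x - lc e r x) (\<lambda>x. g x - lc e r x) < \<eta>"
proof -
  have e: "\<forall>k. L2 D (e k)" "\<forall>k. l2inner D (e k) (e k) = 1" using onb l2_onb_def by auto
  define c where "c k = l2inner D g (e k)" for k
  define S where "S n x = (\<Sum>k<n. c k *\<^sub>R e k x)" for n x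
  obtain n where n: "l2inner D (\<lambda>x. g x - S n x) (\<lambda>x. g x - S n x) < \<eta>/4"
    using order_tendstoD(2)[OF onb_tends[OF onb g], of "\<eta>/4"] eta unfolding S_def c_def
    by (metis (no_types, lifting) eventually_sequentially order.refl zero_less_divide_iff zero_less_numeral)
  define \<theta> where "\<theta> = sqrt \<eta> / (2 * (n + 1))"
  have th: "0 < \<theta>" using eta by (simp add: \<theta>_def)
  have "\<forall>k. \<exists>\<rho>::rat. \<bar>c k - of_rat \<rho>\<bar> < \<theta>"
  proof
    fix k
    obtain q where q: "q \<in> \<rat>" "c k < q" "q < c k + \<theta>" using Rats_dense_in_real[of "c k" "c k + \<theta>"] th by auto
    then obtain \<rho> where "q = of_rat \<rho>" by (auto elim: Rats_cases)
    thus "\<exists>\<rho>::rat. \<bar>c k - of_rat \<rho>\<bar> < \<theta>" using q by (intro exI[of _ \<rho>]) auto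
  qed
  then obtain \<rho> where rho: "\<And>k. \<bar>c k - of_rat (\<rho> k)\<bar> < \<theta>" by metis
  define r where "r = map \<rho> [0..<n]"
  have lcr: "lc e r x = (\<Sum>k<n. of_rat (\<rho> k) *\<^sub>R e k x)" for x
    unfolding lc_def r_def by (intro sum.cong) auto
  have diff: "S n x - lc e r x = (\<Sum>k<n. (c k - of_rat (\<rho> k)) *\<^sub>R e k x)" for x
    unfolding lcr S_def by (simp add: scaleR_diff_left sum_subtractf)
  have LS: "L2 D (S n)" unfolding S_def using L2_sum[OF D e(1), where n=n and c=c] by simp
  have Lr: "L2 D (lc e r)" unfolding lcr[abs_def] using L2_sum[OF D e(1), where n=n and c="\<lambda>k. real_of_rat (\<rho> k)"] by simp
  have "l2inner D (\<lambda>x. S n x - lc e r x) (\<lambda>x. S n x - lc e r x) \<le> \<theta>\<^sup>2 * n * n"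
    unfolding diff using sum_bound[OF D e, of n "\<lambda>k. c k - of_rat (\<rho> k)" \<theta>] rho by (auto intro: less_imp_le)
  also have "\<dots> < \<eta> / 4"
  proof -
    have "\<theta>\<^sup>2 * n * n = \<eta> * (real n * real n) / (4 * (real n + 1) * (real n + 1))"
      using eta by (simp add: \<theta>_def power_divide power_mult_distrib power2_eq_square algebra_simps)
    also have "\<dots> < \<eta> / 4"
    proof -
      have a: "\<eta> * (real n * real n) < \<eta> * ((real n + 1) * (real n + 1))"
        using eta by (intro mult_strict_left_mono) (auto intro: mult_strict_mono)
      have Q: "0 < (real n + 1) * (real n + 1)" by (simp add: add_pos_nonneg)
      have b: "\<eta> * (real n * real n) / ((real n + 1) * (real n + 1)) < \<eta>"
        using a by (simp only: pos_divide_less_eq[OF Q])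
      have e: "\<eta> * (real n * real n) / (4 * (real n + 1) * (real n + 1)) = (\<eta> * (real n * real n) / ((real n + 1) * (real n + 1))) / 4"
        by simp
      show ?thesis unfolding e by (rule divide_strict_right_mono[OF b]) simp
    qed
    finally show ?thesis .
  qed
  finally have "l2inner D (\<lambda>x. S n x - lc e r x) (\<lambda>x. S n x - lc e r x) < \<eta> / 4" .
  hence "l2inner D (\<lambda>x. g x - lc e r x) (\<lambda>x. g x - lc e r x) < \<eta>"
    using l2_tri[OF D g Lr LS] n by linarith
  thus ?thesis by blast
qed




lemma L2_lc: "D \<in> sets lborel \<Longrightarrow> \<forall>k. L2 D (e k) \<Longrightarrow> L2 D (lc e r)"
  unfolding lc_def[abs_def] using L2_sum[where c="\<lambda>k. real_of_rat (r!k)" and n="length r"] by simp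

lemma l2inner_self_swap: "l2inner D (\<lambda>x. f x - g x) (\<lambda>x. f x - g x) = l2inner D (\<lambda>x. g x - f x) (\<lambda>x. g x - f x)"
  unfolding l2inner_self by (simp add: norm_minus_commute)

lemma det:
  fixes f :: vfield and \<Psi> :: "rat list \<times> nat \<Rightarrow> sfield"
  assumes D: "D \<in> sets lborel" and onb: "l2_onb D e" and f: "L2 D f"
    and LG: "\<forall>\<psi>. test_fun D \<psi> \<longrightarrow> L2 D (grad \<psi>)"
    and H: "\<forall>i. test_fun D (\<Psi> i) \<longrightarrow> l2inner D f (grad (\<Psi> i)) = 0"
    and PS: "\<forall>r m. (\<exists>\<psi>. test_fun D \<psi> \<and> l2inner D (\<lambda>x. grad \<psi> x - lc e r x) (\<lambda>x. grad \<psi> x - lc e r x) < inverse (real (Suc m)))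
       \<longrightarrow> test_fun D (\<Psi> (r,m)) \<and> l2inner D (\<lambda>x. grad (\<Psi> (r,m)) x - lc e r x) (\<lambda>x. grad (\<Psi> (r,m)) x - lc e r x) < inverse (real (Suc m))"
    and psi: "test_fun D \<psi>"
  shows "l2inner D f (grad \<psi>) = 0"
proof (rule ccontr)
  assume ne: "l2inner D f (grad \<psi>) \<noteq> 0"
  define g where "g = grad \<psi>"
  have g: "L2 D g" using LG psi g_def by blast
  define c where "c = \<bar>l2inner D f g\<bar>"
  have c: "0 < c" using ne c_def g_def by simp
  define K where "K = l2inner D f f + 1"
  have K: "0 < K" using l2inner_self_nonneg[of D f] K_def by linarith
  define l where "l = c / K"
  have l: "0 < l" using c K l_def by simp
  define \<eta> where "\<eta> = l\<^sup>2 / 4"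
  have eta: "0 < \<eta>" unfolding \<eta>_def using l by (simp add: divide_pos_pos)
  obtain m where m: "inverse (real (Suc m)) < \<eta>" using reals_Archimedean[OF eta] by blast
  have em: "l2_onb D e" by (fact onb)
  have ek: "\<forall>k. L2 D (e k)" using onb l2_onb_def by blast
  obtain r where r: "l2inner D (\<lambda>x. g x - lc e r x) (\<lambda>x. g x - lc e r x) < inverse (real (Suc m))"
    using rat_approx[OF D onb g, of "inverse (real (Suc m))"] by auto
  have "test_fun D (\<Psi> (r,m)) \<and> l2inner D (\<lambda>x. grad (\<Psi> (r,m)) x - lc e r x) (\<lambda>x. grad (\<Psi> (r,m)) x - lc e r x) < inverse (real (Suc m))"
    using PS psi r g_def by blast
  then obtain \<phi> where phi: "test_fun D \<phi>" "l2inner D (\<lambda>x. grad \<phi> x - lc e r x) (\<lambda>x. grad \<phi> x - lc e r x) < inverse (real (Suc m))"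
    and H\<phi>: "l2inner D f (grad \<phi>) = 0" using H by blast
  define g' where "g' = grad \<phi>"
  have g': "L2 D g'" using LG phi g'_def by blast
  have L: "L2 D (lc e r)" using L2_lc[OF D ek] .
  define d where "d = (\<lambda>x. g x - g' x)"
  have dL: "L2 D d" unfolding d_def using L2_diff[OF D g g'] .
  have "l2inner D d d \<le> 2 * l2inner D (\<lambda>x. g x - lc e r x) (\<lambda>x. g x - lc e r x) + 2 * l2inner D (\<lambda>x. lc e r x - g' x) (\<lambda>x. lc e r x - g' x)"
    unfolding d_def by (rule l2_tri[OF D g g' L])
  also have "\<dots> < 4 * \<eta>"
    using r phi(2) m l2inner_self_swap[of D "lc e r" g'] g'_def by simp
  finally have Nd: "l2inner D d d \<le> l\<^sup>2" using \<eta>_def by simp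
  have "l2inner D f d = l2inner D f g - l2inner D f g'"
    unfolding d_def by (rule l2inner_diff_right[OF f g g'])
  hence fd: "l2inner D f d = l2inner D f g" using H\<phi> g'_def by simp
  have "\<bar>l2inner D f d\<bar> \<le> (l * l2inner D f f + l2inner D d d / l) / 2"
    by (rule l2_bound[OF f dL l])
  also have "\<dots> \<le> (l * l2inner D f f + l) / 2"
  proof -
    have "l2inner D d d / l \<le> l\<^sup>2 / l" using Nd l by (simp add: divide_right_mono)
    also have "\<dots> = l" by (simp add: power2_eq_square)
    finally have "l2inner D d d / l \<le> l" .
    thus ?thesis by (intro divide_right_mono add_left_mono) auto
  qed
  also have "\<dots> = c / 2"
  proof -
    have "l * K = c" using K l_def by simp
    moreover have "l * l2inner D f f + l = l * K" by (simp add: K_def algebra_simps)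
    ultimately show ?thesis by simp
  qed
  finally have "c \<le> c / 2" using fd c_def by simp
  thus False using c by simp
qed




lemma Q_orth:
  assumes D: "D = box a b" and coef: "coefficient D \<delta> \<epsilon>" and dpos: "0 < \<delta>"
    and covQ: "covariance_op D Q" and g: "L2 D g"
    and hyp: "\<forall>\<psi>. div_distr D (fscale \<epsilon> (fscale (\<lambda>x. 1 / \<epsilon> x) (Q g))) \<psi> = 0"
    and psi: "test_fun D \<psi>"
  shows "l2inner D (Q g) (grad \<psi>) = 0"
proof -
  have "\<forall>f. L2 D f \<longrightarrow> L2 D (Q f)" using covQ unfolding covariance_op_def by (elim conjE) assumption
  hence Qg: "L2 D (Q g)" using g by blast
  have gp: "L2 D (grad \<psi>)" using L2_grad[OF psi D] .
  have Dm: "D \<in> sets lborel" using D by simp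
  have em: "\<epsilon> \<in> borel_measurable lborel" using coef coefficient_def by blast
  have I: "set_integrable lborel D (\<lambda>x. Q g x \<bullet> grad \<psi> x)" by (rule L2_inner_int[OF Qg gp])
  hence m2: "(\<lambda>x. indicator D x *\<^sub>R (Q g x \<bullet> grad \<psi> x)) \<in> borel_measurable lborel"
    unfolding set_integrable_def by (rule borel_measurable_integrable)
  have e1: "(\<lambda>x. indicator D x *\<^sub>R (fscale \<epsilon> (fscale (\<lambda>x. 1 / \<epsilon> x) (Q g)) x \<bullet> grad \<psi> x))
      = (\<lambda>x. (\<epsilon> x * (1 / \<epsilon> x)) * (indicator D x *\<^sub>R (Q g x \<bullet> grad \<psi> x)))"
    by (auto simp: fun_eq_iff fscale_def)
  have m1: "(\<lambda>x. indicator D x *\<^sub>R (fscale \<epsilon> (fscale (\<lambda>x. 1 / \<epsilon> x) (Q g)) x \<bullet> grad \<psi> x)) \<in> borel_measurable lborel"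
    unfolding e1 using em m2 by (intro borel_measurable_times borel_measurable_divide borel_measurable_const)
  obtain C where C: "AE x in lborel. x \<in> D \<longrightarrow> \<delta> \<le> \<epsilon> x \<and> \<epsilon> x \<le> C"
    using coef coefficient_def by blast
  have ae: "AE x in lborel. indicator D x *\<^sub>R (fscale \<epsilon> (fscale (\<lambda>x. 1 / \<epsilon> x) (Q g)) x \<bullet> grad \<psi> x)
      = indicator D x *\<^sub>R (Q g x \<bullet> grad \<psi> x)"
    using C
  proof eventually_elim
    case (elim x)
    show ?case
    proof (cases "x \<in> D")
      case True
      hence "\<epsilon> x \<noteq> 0" using elim dpos by auto
      thus ?thesis unfolding fscale_def by simp
    next
      case False thus ?thesis by simp
    qed
  qed
  have "l2inner D (fscale \<epsilon> (fscale (\<lambda>x. 1 / \<epsilon> x) (Q g))) (grad \<psi>) = l2inner D (Q g) (grad \<psi>)"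
    unfolding l2inner_def set_lebesgue_integral_def by (rule integral_cong_AE[OF m1 m2 ae])
  moreover have "l2inner D (fscale \<epsilon> (fscale (\<lambda>x. 1 / \<epsilon> x) (Q g))) (grad \<psi>) = 0"
    using hyp psi unfolding div_distr_def by (metis neg_equal_0_iff_equal)
  ultimately show ?thesis by simp
qed

lemma key:
  assumes D: "D = box a b" and prob: "prob_space M" and W: "qwiener D M Q W" and covQ: "covariance_op D Q"
    and orth: "\<forall>g \<psi>. L2 D g \<longrightarrow> test_fun D \<psi> \<longrightarrow> l2inner D (Q g) (grad \<psi>) = 0"
    and st: "0 \<le> s" "s \<le> t"
  shows "AE \<omega> in M. \<forall>\<psi>. test_fun D \<psi> \<longrightarrow> l2inner D (fminus (W t \<omega>) (W s \<omega>)) (grad \<psi>) = 0"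
proof -
  have Dm: "D \<in> sets lborel" using D by simp
  have LG: "\<forall>\<psi>. test_fun D \<psi> \<longrightarrow> L2 D (grad \<psi>)" using L2_grad D by blast
  have "\<exists>e. l2_onb D e \<and> summable (\<lambda>k. l2inner D (Q (e k)) (e k))"
    using covQ unfolding covariance_op_def by (elim conjE) assumption
  then obtain e where onb: "l2_onb D e" by blast
  define P where "P = (\<lambda>(r,m) \<psi>. test_fun D \<psi> \<and> l2inner D (\<lambda>x. grad \<psi> x - lc e r x) (\<lambda>x. grad \<psi> x - lc e r x) < inverse (real (Suc m)))"
  define \<Psi> where "\<Psi> = (\<lambda>i::rat list \<times> nat. SOME \<psi>. P i \<psi>)"
  have PS: "\<forall>r m. (\<exists>\<psi>. test_fun D \<psi> \<and> l2inner D (\<lambda>x. grad \<psi> x - lc e r x) (\<lambda>x. grad \<psi> x - lc e r x) < inverse (real (Suc m)))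
       \<longrightarrow> test_fun D (\<Psi> (r,m)) \<and> l2inner D (\<lambda>x. grad (\<Psi> (r,m)) x - lc e r x) (\<lambda>x. grad (\<Psi> (r,m)) x - lc e r x) < inverse (real (Suc m))"
  proof (intro allI impI)
    fix r m assume "\<exists>\<psi>. test_fun D \<psi> \<and> l2inner D (\<lambda>x. grad \<psi> x - lc e r x) (\<lambda>x. grad \<psi> x - lc e r x) < inverse (real (Suc m))"
    hence "\<exists>\<psi>. P (r,m) \<psi>" unfolding P_def by simp
    hence "P (r,m) (\<Psi> (r,m))" unfolding \<Psi>_def by (rule someI_ex)
    thus "test_fun D (\<Psi> (r,m)) \<and> l2inner D (\<lambda>x. grad (\<Psi> (r,m)) x - lc e r x) (\<lambda>x. grad (\<Psi> (r,m)) x - lc e r x) < inverse (real (Suc m))"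
      unfolding P_def by simp
  qed
  have W1: "\<forall>t\<ge>0. \<forall>\<omega>\<in>space M. L2 D (W t \<omega>)"
    using W unfolding qwiener_def by (elim conjE) assumption
  have W4: "\<forall>s t h. 0 \<le> s \<longrightarrow> s \<le> t \<longrightarrow> L2 D h \<longrightarrow>
        centered_gaussian M (\<lambda>\<omega>. l2inner D (fminus (W t \<omega>) (W s \<omega>)) h) ((t - s) * l2inner D (Q h) h)"
    using W unfolding qwiener_def by (elim conjE) assumption
  have single: "AE \<omega> in M. l2inner D (fminus (W t \<omega>) (W s \<omega>)) (grad \<psi>) = 0" if psi: "test_fun D \<psi>" for \<psi>
  proof -
    have h: "L2 D (grad \<psi>)" using LG psi by blast
    have "centered_gaussian M (\<lambda>\<omega>. l2inner D (fminus (W t \<omega>) (W s \<omega>)) (grad \<psi>)) ((t - s) * l2inner D (Q (grad \<psi>)) (grad \<psi>))"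
      using W4 st h by blast
    moreover have "l2inner D (Q (grad \<psi>)) (grad \<psi>) = 0" using orth h psi by blast
    ultimately show ?thesis unfolding centered_gaussian_def by simp
  qed
  have A1: "AE \<omega> in M. \<forall>i. test_fun D (\<Psi> i) \<longrightarrow> l2inner D (fminus (W t \<omega>) (W s \<omega>)) (grad (\<Psi> i)) = 0"
    unfolding AE_all_countable
  proof
    fix i
    show "AE \<omega> in M. test_fun D (\<Psi> i) \<longrightarrow> l2inner D (fminus (W t \<omega>) (W s \<omega>)) (grad (\<Psi> i)) = 0"
      by (cases "test_fun D (\<Psi> i)") (auto intro: single)
  qed
  have A2: "AE \<omega> in M. \<omega> \<in> space M" by (rule AE_space)
  show ?thesis using A1 A2
  proof eventually_elim
    case (elim \<omega>)
    have f: "L2 D (fminus (W t \<omega>) (W s \<omega>))"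
      unfolding fminus_def using W1 st elim(2)
      by (intro L2_diff[OF Dm]) auto
    show ?case using det[OF Dm onb f LG _ PS] elim(1) by blast
  qed
qed




theorem proposition3p2:
  fixes a b :: "real^3" and D :: "(real^3) set"
    and \<epsilon> \<mu> :: "real^3 \<Rightarrow> real" and \<delta> \<tau> :: real and N :: nat
    and M :: "'w measure" and Qe Qm :: "vfield \<Rightarrow> vfield"
    and We Wm :: "real \<Rightarrow> 'w \<Rightarrow> vfield"
    and E H :: "nat \<Rightarrow> 'w \<Rightarrow> vfield"
  assumes cuboid: "D = box a b" "\<forall>i. a $ i < b $ i"
    and coeffs: "0 < \<delta>" "coefficient D \<delta> \<epsilon>" "coefficient D \<delta> \<mu>"
    and prob: "prob_space M"
    and covs: "covariance_op D Qe" "covariance_op D Qm"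
    and wiener: "qwiener D M Qe We" "qwiener D M Qm Wm" "indep_processes D M We Wm"
    and tau: "0 < \<tau>"
    and rv: "\<forall>n\<le>N. random_field D M (E n) \<and> random_field D M (H n)"
    and scheme: "\<forall>n<N. AE \<omega> in M.
       midpoint_step D \<epsilon> \<mu> \<tau> (E n \<omega>) (H n \<omega>) (E (Suc n) \<omega>) (H (Suc n) \<omega>)
         (fminus (We (real (Suc n) * \<tau>) \<omega>) (We (real n * \<tau>) \<omega>))
         (fminus (Wm (real (Suc n) * \<tau>) \<omega>) (Wm (real n * \<tau>) \<omega>))"
    and QV0: "\<forall>h. inV D h \<longrightarrow> inV0 D \<epsilon> \<mu> (Qop \<epsilon> \<mu> Qe Qm h)"
  shows "\<forall>n<N. AE \<omega> in M.
           div_distr D (fscale \<epsilon> (E (Suc n) \<omega>)) = div_distr D (fscale \<epsilon> (E n \<omega>))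
         \<and> div_distr D (fscale \<mu> (H (Suc n) \<omega>)) = div_distr D (fscale \<mu> (H n \<omega>))"
proof (intro allI impI)
  fix n assume nN: "n < N"
  have Dm: "D \<in> sets lborel" using cuboid by simp
  have orthE: "\<forall>g \<psi>. L2 D g \<longrightarrow> test_fun D \<psi> \<longrightarrow> l2inner D (Qe g) (grad \<psi>) = 0"
  proof (intro allI impI)
    fix g \<psi> assume g: "L2 D g" and psi: "test_fun D \<psi>"
    have "inV D (g, \<lambda>x. 0)" using g L2_zero inV_def by simp
    hence "inV0 D \<epsilon> \<mu> (Qop \<epsilon> \<mu> Qe Qm (g, \<lambda>x. 0))" using QV0 by blast
    hence "\<forall>\<psi>. div_distr D (fscale \<epsilon> (fscale (\<lambda>x. 1 / \<epsilon> x) (Qe g))) \<psi> = 0"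
      unfolding inV0_def Qop_def by simp
    thus "l2inner D (Qe g) (grad \<psi>) = 0"
      using Q_orth[OF cuboid(1) coeffs(2) coeffs(1) covs(1) g _ psi] by blast
  qed
  have orthM: "\<forall>g \<psi>. L2 D g \<longrightarrow> test_fun D \<psi> \<longrightarrow> l2inner D (Qm g) (grad \<psi>) = 0"
  proof (intro allI impI)
    fix g \<psi> assume g: "L2 D g" and psi: "test_fun D \<psi>"
    have "inV D (\<lambda>x. 0, g)" using g L2_zero inV_def by simp
    hence "inV0 D \<epsilon> \<mu> (Qop \<epsilon> \<mu> Qe Qm (\<lambda>x. 0, g))" using QV0 by blast
    hence "\<forall>\<psi>. div_distr D (fscale \<mu> (fscale (\<lambda>x. 1 / \<mu> x) (Qm g))) \<psi> = 0"
      unfolding inV0_def Qop_def by simp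
    thus "l2inner D (Qm g) (grad \<psi>) = 0"
      using Q_orth[OF cuboid(1) coeffs(3) coeffs(1) covs(2) g _ psi] by blast
  qed
  have st: "0 \<le> real n * \<tau>" "real n * \<tau> \<le> real (Suc n) * \<tau>" using tau by auto
  have KE: "AE \<omega> in M. \<forall>\<psi>. test_fun D \<psi> \<longrightarrow>
      l2inner D (fminus (We (real (Suc n) * \<tau>) \<omega>) (We (real n * \<tau>) \<omega>)) (grad \<psi>) = 0"
    by (rule key[OF cuboid(1) prob wiener(1) covs(1) orthE st])
  have KM: "AE \<omega> in M. \<forall>\<psi>. test_fun D \<psi> \<longrightarrow>
      l2inner D (fminus (Wm (real (Suc n) * \<tau>) \<omega>) (Wm (real n * \<tau>) \<omega>)) (grad \<psi>) = 0"
    by (rule key[OF cuboid(1) prob wiener(2) covs(2) orthM st])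
  have S: "AE \<omega> in M. midpoint_step D \<epsilon> \<mu> \<tau> (E n \<omega>) (H n \<omega>) (E (Suc n) \<omega>) (H (Suc n) \<omega>)
         (fminus (We (real (Suc n) * \<tau>) \<omega>) (We (real n * \<tau>) \<omega>))
         (fminus (Wm (real (Suc n) * \<tau>) \<omega>) (Wm (real n * \<tau>) \<omega>))"
    using scheme nN by blast
  show "AE \<omega> in M.
           div_distr D (fscale \<epsilon> (E (Suc n) \<omega>)) = div_distr D (fscale \<epsilon> (E n \<omega>))
         \<and> div_distr D (fscale \<mu> (H (Suc n) \<omega>)) = div_distr D (fscale \<mu> (H n \<omega>))"
    using KE KM S
  proof eventually_elim
    case (elim \<omega>)
    have z: "l2inner D F (\<lambda>x. 0) = 0" for F unfolding l2inner_def by simp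
    have "div_distr D (fscale \<epsilon> (E (Suc n) \<omega>)) \<psi> = div_distr D (fscale \<epsilon> (E n \<omega>)) \<psi>
        \<and> div_distr D (fscale \<mu> (H (Suc n) \<omega>)) \<psi> = div_distr D (fscale \<mu> (H n \<omega>)) \<psi>" for \<psi>
    proof (cases "test_fun D \<psi>")
      case True
      have tv: "test_vfield D (grad \<psi>)" by (rule test_vfield_grad[OF True])
      have cg: "curl (grad \<psi>) = (\<lambda>x. 0)" by (rule curl_grad[OF True])
      have m: "l2inner D (fscale \<epsilon> (E (Suc n) \<omega>)) (grad \<psi>) = l2inner D (fscale \<epsilon> (E n \<omega>)) (grad \<psi>)
          - l2inner D (fminus (We (real (Suc n) * \<tau>) \<omega>) (We (real n * \<tau>) \<omega>)) (grad \<psi>)"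
        "l2inner D (fscale \<mu> (H (Suc n) \<omega>)) (grad \<psi>) = l2inner D (fscale \<mu> (H n \<omega>)) (grad \<psi>)
          - l2inner D (fminus (Wm (real (Suc n) * \<tau>) \<omega>) (Wm (real n * \<tau>) \<omega>)) (grad \<psi>)"
        using elim(3)[unfolded midpoint_step_def, rule_format, OF tv] unfolding cg z by simp_all
      show ?thesis using m elim(1,2) True unfolding div_distr_def by simp
    next
      case False
      thus ?thesis unfolding div_distr_def by simp
    qed
    thus ?case by (simp add: fun_eq_iff)
  qed
qed


end
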